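(* Let $H=\left(\frac{3,-1}{\mathbb{Q}}\right)$, and let $d_1\neq d_2$ be square-free positive integers such that for $i=1,2$ the set $S_{d_i}$ is infinite. For $i=1,2$ let $\varphi_{d_i}:\mathbb{N}\to S_{d_i}$ be a bijection, let $a_i,b_i>0$ be rationals such that $a_i+b_i\sqrt{d_i}$ is a unit of infinite order in $\mathbb{Q}(\sqrt{d_i})$, and put $\psi_{d_i}(t,m)=(a_i+b_i\varphi_{d_i}(t))^m\in H$. Then for $t_1,t_2,m_1,m_2\in\mathbb{N}$ one has $\psi_{d_1}(t_1,m_1)=\psi_{d_2}(t_2,m_2)$ if and only if $m_1=m_2=0$.
   Context: $\mathbb{N}=\{0,1,2,\dots\}$. $H=\left(\frac{3,-1}{\mathbb{Q}}\right)$ is the quaternion $\mathbb{Q}$-algebra with basis $1,I,J,K=IJ$ and relations $I^2=3$, $J^2=-1$, $IJ=-JI$. For a square-free $d>0$, $S_d=\{xI+yJ+zK:(x,y,z)\in\mathbb{Z}^3,\ 3x^2-y^2+3z^2=d\}$; each $\omega\in S_d$ satisfies $\omega^2=d$. *)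

theory Defs
  imports Complex_Main "HOL-Computational_Algebra.Squarefree"
begin

text \<open>Elements of the quaternion algebra H = (3,-1 / Q): HQ x0 x1 x2 x3 stands for
  x0 + x1 I + x2 J + x3 K with I^2 = 3, J^2 = -1, K = IJ = -JI.\<close>
datatype hquat = HQ rat rat rat rat

fun hmul :: "hquat \<Rightarrow> hquat \<Rightarrow> hquat" where
  "hmul (HQ x0 x1 x2 x3) (HQ y0 y1 y2 y3) =
     HQ (x0*y0 + 3*x1*y1 - x2*y2 + 3*x3*y3)
        (x0*y1 + x1*y0 + x2*y3 - x3*y2)
        (x0*y2 + x2*y0 + 3*x1*y3 - 3*x3*y1)
        (x0*y3 + x3*y0 + x1*y2 - x2*y1)"

fun hadd :: "hquat \<Rightarrow> hquat \<Rightarrow> hquat" where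
  "hadd (HQ x0 x1 x2 x3) (HQ y0 y1 y2 y3) = HQ (x0+y0) (x1+y1) (x2+y2) (x3+y3)"

definition hscal :: "rat \<Rightarrow> hquat" where
  "hscal c = HQ c 0 0 0"

primrec hpow :: "hquat \<Rightarrow> nat \<Rightarrow> hquat" where
  "hpow q 0 = hscal 1"
| "hpow q (Suc n) = hmul q (hpow q n)"

definition S :: "int \<Rightarrow> hquat set" where
  "S d = {HQ 0 (of_int x) (of_int y) (of_int z) | x y z :: int.
            3*x^2 - y^2 + 3*z^2 = d}"

definition psi :: "rat \<Rightarrow> rat \<Rightarrow> (nat \<Rightarrow> hquat) \<Rightarrow> nat \<Rightarrow> nat \<Rightarrow> hquat" where
  "psi a b \<phi> t m = hpow (hadd (hscal a) (hmul (hscal b) (\<phi> t))) m"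

text \<open>a + b sqrt d (viewed inside R, which contains Q(sqrt d)) has infinite
  multiplicative order.\<close>
definition inf_order_unit :: "int \<Rightarrow> rat \<Rightarrow> rat \<Rightarrow> bool" where
  "inf_order_unit d a b \<longleftrightarrow>
     (let u = of_rat a + of_rat b * sqrt (real_of_int d) in
        u \<noteq> 0 \<and> (\<forall>n::nat. n > 0 \<longrightarrow> u ^ n \<noteq> 1))"

end

theory Submission
  imports Defs
begin

fun AB :: "rat \<Rightarrow> rat \<Rightarrow> rat \<Rightarrow> nat \<Rightarrow> rat \<times> rat" where
  "AB a b d 0 = (1, 0)"
| "AB a b d (Suc m) = (let (A, B) = AB a b d m in (a*A + b*B*d, a*B + b*A))"

lemma hpow_form:
  assumes "3*x^2 - y^2 + 3*z^2 = (d::rat)"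
  shows "hpow (hadd (hscal a) (hmul (hscal b) (HQ 0 x y z))) m =
         HQ (fst (AB a b d m)) (snd (AB a b d m) * x) (snd (AB a b d m) * y) (snd (AB a b d m) * z)"
proof (induction m)
  case 0 then show ?case by (simp add: hscal_def)
next
  case (Suc m)
  obtain A B where e: "AB a b d m = (A, B)" by fastforce
  have dd: "d = 3*x*x - y*y + 3*z*z" using assms by (simp add: power2_eq_square)
  show ?case using Suc e by (simp add: dd hscal_def algebra_simps)
qed

lemma AB_pos:
  assumes "a > 0" "b > 0" "d > 0"
  shows "fst (AB a b d m) > 0 \<and> (m > 0 \<longrightarrow> snd (AB a b d m) > 0) \<and> snd (AB a b d m) \<ge> 0"
proof (induction m)
  case 0 then show ?case by simp
next
  case (Suc m)
  obtain A B where e: "AB a b d m = (A, B)" by fastforce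
  with Suc have "A > 0" "B \<ge> 0" by auto
  have "a*A + b*B*d > 0" using \<open>A>0\<close> \<open>B\<ge>0\<close> assms
    by (simp add: add_pos_nonneg)
  moreover have "a*B + b*A > 0" using \<open>A>0\<close> \<open>B\<ge>0\<close> assms
    by (simp add: add_nonneg_pos)
  ultimately show ?case using e by simp
qed

lemma sqfree_eq:
  fixes d1 d2 :: int and r :: rat
  assumes "squarefree d1" "squarefree d2" "d1 > 0" "d2 > 0"
    and "of_int d1 = of_int d2 * r^2"
  shows "d1 = d2"
proof -
  obtain p q where pq: "quotient_of r = (p, q)" by fastforce
  have q0: "q > 0" and cop: "coprime p q" and r: "r = of_int p / of_int q"
    using pq quotient_of_denom_pos quotient_of_coprime quotient_of_div by blast+
  have "of_int d1 * (of_int q)^2 = (of_int d2 * (of_int p)^2 :: rat)"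
    using assms(5) q0 unfolding r by (simp add: field_simps power2_eq_square)
  then have eq: "d1 * q^2 = d2 * p^2"
    by (metis of_int_eq_iff of_int_mult of_int_power)
  have c2: "coprime (q^2) (p^2)" using cop by (simp add: coprime_commute)
  have "q^2 dvd d2 * p^2" using eq by (metis dvd_triv_right)
  then have "q^2 dvd d2" using c2 by (metis coprime_dvd_mult_left_iff)
  then have "is_unit q" using assms(2) by (rule squarefreeD[rotated])
  then have q1: "q = 1" using q0 by auto
  have "p^2 dvd d1" using eq q1 by (metis dvd_triv_right mult_1_right power_one)
  then have "is_unit p" using assms(1) by (rule squarefreeD[rotated])
  then have "\<bar>p\<bar> = 1" by simp
  then have "p^2 = 1" by (metis power2_abs power_one)
  then show ?thesis using eq q1 by simp
qed

lemma S_elem: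
  assumes "w \<in> S d"
  obtains x y z :: rat where "w = HQ 0 x y z" "3*x^2 - y^2 + 3*z^2 = of_int d"
proof -
  from assms obtain x y z :: int where "w = HQ 0 (of_int x) (of_int y) (of_int z)" "3*x^2 - y^2 + 3*z^2 = d"
    unfolding S_def by blast
  moreover have "3*(of_int x::rat)^2 - (of_int y)^2 + 3*(of_int z)^2 = of_int (3*x^2 - y^2 + 3*z^2)" by simp
  ultimately show ?thesis using that by metis
qed


theorem mainTheorem5:
  fixes d1 d2 :: int and \<phi>1 \<phi>2 :: "nat \<Rightarrow> hquat" and a1 b1 a2 b2 :: rat
  assumes "d1 \<noteq> d2"
    and "squarefree d1" and "d1 > 0" and "squarefree d2" and "d2 > 0"
    and "infinite (S d1)" and "infinite (S d2)"
    and "bij_betw \<phi>1 UNIV (S d1)" and "bij_betw \<phi>2 UNIV (S d2)"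
    and "a1 > 0" and "b1 > 0" and "a2 > 0" and "b2 > 0"
    and "inf_order_unit d1 a1 b1" and "inf_order_unit d2 a2 b2"
  shows "\<forall>t1 t2 m1 m2 :: nat.
           psi a1 b1 \<phi>1 t1 m1 = psi a2 b2 \<phi>2 t2 m2 \<longleftrightarrow> (m1 = 0 \<and> m2 = 0)"
proof (intro allI iffI)
  fix t1 t2 m1 m2
  assume eq: "psi a1 b1 \<phi>1 t1 m1 = psi a2 b2 \<phi>2 t2 m2"
  have "\<phi>1 t1 \<in> S d1" "\<phi>2 t2 \<in> S d2" using assms(8,9) bij_betwE by blast+
  then obtain x1 y1 z1 x2 y2 z2 where w1: "\<phi>1 t1 = HQ 0 x1 y1 z1" "3*x1^2 - y1^2 + 3*z1^2 = of_int d1"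
    and w2: "\<phi>2 t2 = HQ 0 x2 y2 z2" "3*x2^2 - y2^2 + 3*z2^2 = of_int d2"
    by (metis S_elem)
  define B1 where "B1 = snd (AB a1 b1 (of_int d1) m1)"
  define B2 where "B2 = snd (AB a2 b2 (of_int d2) m2)"
  have e: "B1*x1 = B2*x2" "B1*y1 = B2*y2" "B1*z1 = B2*z2"
    using eq unfolding psi_def w1(1) w2(1) hpow_form[OF w1(2)] hpow_form[OF w2(2)] B1_def B2_def
    by auto
  have d1eq: "of_int d1 * B1^2 = of_int d2 * B2^2"
  proof -
    have "of_int d1 * B1^2 = 3*(B1*x1)^2 - (B1*y1)^2 + 3*(B1*z1)^2"
      unfolding w1(2)[symmetric] by (simp add: algebra_simps power2_eq_square)
    also have "\<dots> = 3*(B2*x2)^2 - (B2*y2)^2 + 3*(B2*z2)^2" using e by simp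
    also have "\<dots> = of_int d2 * B2^2"
      unfolding w2(2)[symmetric] by (simp add: algebra_simps power2_eq_square)
    finally show ?thesis .
  qed
  have p1: "m1 > 0 \<Longrightarrow> B1 > 0" "B1 \<ge> 0" using AB_pos[OF assms(10,11), of "of_int d1" m1] assms(3)
    unfolding B1_def by auto
  have p2: "m2 > 0 \<Longrightarrow> B2 > 0" "B2 \<ge> 0" using AB_pos[OF assms(12,13), of "of_int d2" m2] assms(5)
    unfolding B2_def by auto
  have b10: "m1 = 0 \<Longrightarrow> B1 = 0" unfolding B1_def by simp
  have b20: "m2 = 0 \<Longrightarrow> B2 = 0" unfolding B2_def by simp
  show "m1 = 0 \<and> m2 = 0"
  proof (rule ccontr)
    assume "\<not> (m1 = 0 \<and> m2 = 0)"
    then consider "m1 > 0" "m2 > 0" | "m1 > 0" "m2 = 0" | "m1 = 0" "m2 > 0" by auto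
    then show False
    proof cases
      case 1
      then have "B1 > 0" "B2 > 0" using p1 p2 by auto
      then have "of_int d2 = of_int d1 * (B1/B2)^2" using d1eq
        by (simp add: field_simps power2_eq_square)
      then have "d2 = d1" using sqfree_eq[OF assms(4,2,5,3)] by blast
      then show False using assms(1) by simp
    next
      case 2
      then have "B1 > 0" "B2 = 0" using p1 b20 by auto
      then have "of_int d1 = (0::rat)" using d1eq by simp
      then show False using assms(3) by simp
    next
      case 3
      then have "B2 > 0" "B1 = 0" using p2 b10 by auto
      then have "of_int d2 = (0::rat)" using d1eq by simp
      then show False using assms(5) by simp
    qed
  qed
next
  fix t1 t2 m1 m2 :: nat
  assume "m1 = 0 \<and> m2 = 0"
  then show "psi a1 b1 \<phi>1 t1 m1 = psi a2 b2 \<phi>2 t2 m2" by (simp add: psi_def)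
qed

end
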